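(* For every integer $n>0$, the rook equivalence graph $G(B)$ of the Ferrers board $B=(0,1,2,\ldots,n-1,n-1)$ (with $n+1$ columns of heights $0,1,\ldots,n-1$ followed by $n-1$) is isomorphic to the complete graph $K_n$.
   Context: A Ferrers board is given by a weakly increasing sequence of non-negative integers $B=(b_1,\ldots,b_n)$ of column heights; it is the set of unit cells in the first quadrant lying in column $i$ and rows $1,\ldots,b_i$. Prepending columns of height $0$ on the left does not change the board, and boards are compared using the same number of columns by such padding. A placement of $k$ rooks on $B$ is a set of $k$ cells of $B$ no two in the same row or column; $r_k(B)$ is the number of such placements. Two boards are rook equivalent if they have equal $r_k$ for all $k\ge 0$. The rook equivalence graph $G(B)$ has as vertices all Ferrers boards rook equivalent to $B$, and $\{B_1,B_2\}$ is an edge iff, written with the same number of columns, $B_1$ and $B_2$ differ in exactly two columns $i$ and $j$, where $B_1$ has $k$ more cells than $B_2$ in column $i$ and $k$ fewer cells than $B_2$ in column $j$, for some $k>0$. *)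

theory Defs
  imports Main
begin

definition ferrers :: "nat list \<Rightarrow> bool" where
  "ferrers B \<longleftrightarrow> sorted B"

definition cells :: "nat list \<Rightarrow> (nat \<times> nat) set" where
  "cells B = {(i, r). i < length B \<and> 1 \<le> r \<and> r \<le> B ! i}"

definition rook_placements :: "nat list \<Rightarrow> nat \<Rightarrow> (nat \<times> nat) set set" where
  "rook_placements B k =
     {S. S \<subseteq> cells B \<and> card S = k \<and> inj_on fst S \<and> inj_on snd S}"

definition rook_num :: "nat list \<Rightarrow> nat \<Rightarrow> nat" where
  "rook_num B k = card (rook_placements B k)"

definition rook_equiv :: "nat list \<Rightarrow> nat list \<Rightarrow> bool" where
  "rook_equiv B1 B2 \<longleftrightarrow> (\<forall>k. rook_num B1 k = rook_num B2 k)"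

text \<open>Prepending zero columns does not change the board; we identify a board
  with its canonical representative obtained by deleting leading zero columns.\<close>
definition canon :: "nat list \<Rightarrow> nat list" where
  "canon B = dropWhile (\<lambda>h. h = 0) B"

definition pad :: "nat \<Rightarrow> nat list \<Rightarrow> nat list" where
  "pad m B = replicate (m - length B) 0 @ B"

definition rook_adj :: "nat list \<Rightarrow> nat list \<Rightarrow> bool" where
  "rook_adj B1 B2 \<longleftrightarrow>
     (let m = max (length B1) (length B2); P1 = pad m B1; P2 = pad m B2 in
      \<exists>i j k. i < m \<and> j < m \<and> i \<noteq> j \<and> k > 0 \<and>
        P1 ! i = P2 ! i + k \<and> P1 ! j + k = P2 ! j \<and>
        (\<forall>l<m. l \<noteq> i \<longrightarrow> l \<noteq> j \<longrightarrow> P1 ! l = P2 ! l))"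

definition rook_graph_vertices :: "nat list \<Rightarrow> nat list set" where
  "rook_graph_vertices B = {canon C | C. ferrers C \<and> rook_equiv C B}"

definition rook_graph_iso_complete :: "nat list \<Rightarrow> nat \<Rightarrow> bool" where
  "rook_graph_iso_complete B n \<longleftrightarrow>
     (\<exists>f. bij_betw f (rook_graph_vertices B) {..<n} \<and>
        (\<forall>u \<in> rook_graph_vertices B. \<forall>v \<in> rook_graph_vertices B.
            rook_adj u v \<longleftrightarrow> f u \<noteq> f v))"

end

theory Submission
  imports Defs "HOL-Computational_Algebra.Polynomial"
begin


lemma cells_Sigma: "cells L = (SIGMA i:{..<length L}. {1..L!i})"
  unfolding cells_def by auto

lemma finite_cells: "finite (cells L)"
  unfolding cells_Sigma by auto

lemma finite_rp: "finite (rook_placements L k)"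
  by (rule finite_subset[of _ "Pow (cells L)"]) (auto simp: rook_placements_def finite_cells)

lemma rook_num_0: "rook_num L 0 = 1"
proof -
  have "rook_placements L 0 = {{}}"
    unfolding rook_placements_def using finite_subset[OF _ finite_cells] by auto
  then show ?thesis by (simp add: rook_num_def)
qed

lemma rp_zero_large:
  assumes "\<forall>x\<in>set L. x \<le> a" "k > a"
  shows "rook_num L k = 0"
proof -
  have "rook_placements L k = {}"
  proof (rule ccontr)
    assume "rook_placements L k \<noteq> {}"
    then obtain S where S: "S \<subseteq> cells L" "card S = k" "inj_on snd S"
      unfolding rook_placements_def by auto
    have "snd ` S \<subseteq> {1..a}"
    proof
      fix y assume "y \<in> snd ` S"
      then obtain i where "(i, y) \<in> S" by force
      then have "i < length L" "1 \<le> y" "y \<le> L!i" using S(1) unfolding cells_def by auto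
      then show "y \<in> {1..a}" using assms(1) nth_mem by force
    qed
    hence "card (snd ` S) \<le> a" using card_mono[of "{1..a}"] by fastforce
    moreover have "card (snd ` S) = k" using S card_image by metis
    ultimately show False using assms by simp
  qed
  then show ?thesis by (simp add: rook_num_def)
qed

lemma rook_num_Cons0: "rook_num (0 # L) k = rook_num L k"
proof -
  define f :: "nat \<times> nat \<Rightarrow> nat \<times> nat" where "f = (\<lambda>(i, r). (Suc i, r))"
  have injf: "inj f" unfolding f_def inj_def by auto
  have cells: "cells (0 # L) = f ` cells L"
    unfolding cells_def f_def
    by (auto simp: image_iff less_Suc_eq_0_disj)
  have "rook_placements (0 # L) k = (`) f ` rook_placements L k"
  proof (rule set_eqI, rule iffI)
    fix S assume "S \<in> rook_placements (0 # L) k"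
    hence S: "S \<subseteq> f ` cells L" "card S = k" "inj_on fst S" "inj_on snd S"
      unfolding rook_placements_def cells by auto
    define T where "T = f -` S"
    have ST: "S = f ` T" using S(1) unfolding T_def by auto
    have "T \<subseteq> cells L"
    proof
      fix x assume "x \<in> T"
      then have "f x \<in> f ` cells L" using S(1) unfolding T_def by auto
      then show "x \<in> cells L" using injf by (simp add: inj_image_mem_iff)
    qed
    moreover have "card T = k" using S(2) ST card_image injf
      by (metis inj_on_subset subset_UNIV)
    moreover have "inj_on fst T" using S(3) ST unfolding inj_on_def f_def by force
    moreover have "inj_on snd T" using S(4) ST unfolding inj_on_def f_def by force
    ultimately show "S \<in> (`) f ` rook_placements L k"
      using ST unfolding rook_placements_def by blast
  next
    fix S assume "S \<in> (`) f ` rook_placements L k"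
    then obtain T where T: "S = f ` T" "T \<subseteq> cells L" "card T = k" "inj_on fst T" "inj_on snd T"
      unfolding rook_placements_def by auto
    have "card S = k" using T injf card_image by (metis inj_on_subset subset_UNIV)
    moreover have "inj_on fst S" using T(1,4) unfolding inj_on_def f_def by force
    moreover have "inj_on snd S" using T(1,5) unfolding inj_on_def f_def by force
    ultimately show "S \<in> rook_placements (0 # L) k"
      using T(1,2) cells unfolding rook_placements_def by blast
  qed
  moreover have "inj_on ((`) f) (rook_placements L k)"
    using injf by (simp add: inj_on_def inj_image_eq_iff)
  ultimately show ?thesis unfolding rook_num_def by (simp add: card_image)
qed

lemma rook_num_pad: "rook_num (pad m L) k = rook_num L k"
proof -
  have "rook_num (replicate j 0 @ L) k = rook_num L k" for j
    by (induction j) (auto simp: rook_num_Cons0)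
  then show ?thesis unfolding pad_def by simp
qed

lemma canon_Cons0: "canon (0 # L) = canon L" unfolding canon_def by simp

lemma canon_rep: "canon (replicate j 0 @ L) = canon L"
  by (induction j) (auto simp: canon_Cons0)

lemma canon_pad: "canon (pad m L) = canon L"
  unfolding pad_def by (rule canon_rep)

lemma pad_canon: "pad (length L) (canon L) = L"
proof -
  have tw: "takeWhile (\<lambda>h. h = 0) L = replicate (length (takeWhile (\<lambda>h. h = 0) L)) 0"
    by (metis (mono_tags, lifting) replicate_length_same set_takeWhileD)
  have "L = takeWhile (\<lambda>h. h = 0) L @ canon L" unfolding canon_def by simp
  moreover have "length L - length (canon L) = length (takeWhile (\<lambda>h. h = 0) L)"
    using arg_cong[OF calculation, of length] by simp
  ultimately show ?thesis unfolding pad_def using tw by metis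
qed

lemma sorted_pad: "sorted L \<Longrightarrow> sorted (pad m L)"
  unfolding pad_def by (auto simp: sorted_append)



lemma cells_snoc: "cells (L @ [a]) = cells L \<union> {length L} \<times> {1..a}"
  unfolding cells_def by (auto simp: nth_append less_Suc_eq)

lemma cells_fst: "c \<in> cells L \<Longrightarrow> fst c < length L"
  unfolding cells_def by auto

lemma rp_rows:
  assumes "\<forall>x\<in>set L. x \<le> a" "P \<subseteq> cells L"
  shows "snd ` P \<subseteq> {1..a}"
proof
  fix y assume "y \<in> snd ` P"
  then obtain i where "(i, y) \<in> P" by force
  then have "i < length L" "1 \<le> y" "y \<le> L!i" using assms(2) unfolding cells_def by auto
  then show "y \<in> {1..a}" using assms(1) nth_mem by force
qed

lemma rook_rec:
  assumes bound: "\<forall>x\<in>set L. x \<le> a"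
  shows "rook_num (L @ [a]) (Suc k) = rook_num L (Suc k) + (a - k) * rook_num L k"
proof -
  define m where "m = length L"
  define R where "R = rook_placements (L @ [a]) (Suc k)"
  define A1 where "A1 = {S \<in> R. \<forall>c\<in>S. fst c \<noteq> m}"
  define A2 where "A2 = {S \<in> R. \<exists>c\<in>S. fst c = m}"
  define Sig where "Sig = (SIGMA P:rook_placements L k. {1..a} - snd ` P)"
  define F :: "(nat \<times> nat) set \<times> nat \<Rightarrow> (nat \<times> nat) set" where "F = (\<lambda>(P, r). insert (m, r) P)"
  have fin: "finite R" unfolding R_def by (rule finite_rp)
  have R_un: "R = A1 \<union> A2" "A1 \<inter> A2 = {}" unfolding A1_def A2_def by auto
  have cs: "cells (L @ [a]) = cells L \<union> {m} \<times> {1..a}" unfolding m_def by (rule cells_snoc)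
  have A1_eq: "A1 = rook_placements L (Suc k)"
  proof (rule set_eqI)
    fix S
    have "S \<subseteq> cells L \<union> {m} \<times> {1..a} \<and> (\<forall>c\<in>S. fst c \<noteq> m) \<longleftrightarrow> S \<subseteq> cells L"
      using cells_fst unfolding m_def by fastforce
    then show "S \<in> A1 \<longleftrightarrow> S \<in> rook_placements L (Suc k)"
      unfolding A1_def R_def rook_placements_def cs by blast
  qed
  have Pfin: "finite P" if "P \<in> rook_placements L k" for P
    using that finite_subset[OF _ finite_cells] unfolding rook_placements_def by blast
  have Pm: "(m, r) \<notin> P" if "P \<in> rook_placements L k" for P r
    using that cells_fst unfolding rook_placements_def m_def by fastforce
  have card_fib: "card ({1..a} - snd ` P) = a - k" if "P \<in> rook_placements L k" for P
  proof -
    have P: "P \<subseteq> cells L" "card P = k" "inj_on snd P"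
      using that unfolding rook_placements_def by auto
    have "snd ` P \<subseteq> {1..a}" using rp_rows[OF bound P(1)] .
    moreover have "card (snd ` P) = k" using P card_image by metis
    ultimately show ?thesis using card_Diff_subset[of "snd ` P" "{1..a}"] Pfin[OF that] by simp
  qed
  have card_Sig: "card Sig = (a - k) * rook_num L k"
  proof -
    have "card Sig = (\<Sum>P\<in>rook_placements L k. card ({1..a} - snd ` P))"
      unfolding Sig_def by (rule card_SigmaI) (auto simp: finite_rp)
    also have "\<dots> = (\<Sum>P\<in>rook_placements L k. a - k)"
      by (rule sum.cong[OF refl card_fib])
    finally show ?thesis by (simp add: rook_num_def)
  qed
  have inj: "inj_on F Sig"
  proof (rule inj_onI)
    fix x y assume x: "x \<in> Sig" and y: "y \<in> Sig" and eq: "F x = F y"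
    obtain P r where xp: "x = (P, r)" "P \<in> rook_placements L k" by (metis SigmaE x Sig_def)
    obtain Q t where yq: "y = (Q, t)" "Q \<in> rook_placements L k" by (metis SigmaE y Sig_def)
    have e: "insert (m, r) P = insert (m, t) Q" using eq xp yq unfolding F_def by simp
    have "r = t"
    proof -
      have "(m, r) \<in> insert (m, t) Q" using e by blast
      then show ?thesis using Pm[OF yq(2)] by auto
    qed
    moreover have "P = Q"
    proof -
      have "P = insert (m, r) P - {(m, r)}" using Pm[OF xp(2)] by auto
      also have "\<dots> = insert (m, t) Q - {(m, t)}" using e \<open>r = t\<close> by simp
      also have "\<dots> = Q" using Pm[OF yq(2)] by auto
      finally show ?thesis .
    qed
    ultimately show "x = y" using xp yq by simp
  qed
  have A2_eq: "A2 = F ` Sig"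
  proof (rule set_eqI, rule iffI)
    fix S assume "S \<in> A2"
    then have S: "S \<subseteq> cells L \<union> {m} \<times> {1..a}" "card S = Suc k" "inj_on fst S" "inj_on snd S"
      and "\<exists>c\<in>S. fst c = m"
      unfolding A2_def R_def rook_placements_def cs by auto
    then obtain r where r: "(m, r) \<in> S" by force
    define P where "P = S - {(m, r)}"
    have SP: "S = insert (m, r) P" unfolding P_def using r by auto
    have finS: "finite S" using S(1) finite_cells finite_subset by blast
    have "P \<subseteq> cells L"
    proof
      fix c assume c: "c \<in> P"
      then have "c \<in> S" "c \<noteq> (m, r)" unfolding P_def by auto
      moreover have "fst c \<noteq> m"
      proof
        assume "fst c = m"
        then have "c = (m, r)" using S(3) r \<open>c \<in> S\<close> unfolding inj_on_def by (metis fst_conv)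
        then show False using \<open>c \<noteq> (m, r)\<close> by simp
      qed
      ultimately show "c \<in> cells L" using S(1) by auto
    qed
    moreover have "card P = k" unfolding P_def using S(2) r finS by simp
    moreover have "inj_on fst P" "inj_on snd P" using S(3,4) unfolding P_def by (auto intro: inj_on_subset)
    ultimately have Prp: "P \<in> rook_placements L k" unfolding rook_placements_def by blast
    have "r \<in> {1..a}" using S(1) r cells_fst unfolding m_def by fastforce
    moreover have "r \<notin> snd ` P"
    proof
      assume "r \<in> snd ` P"
      then obtain c where c: "c \<in> P" "snd c = r" by force
      then have "c \<in> S" unfolding P_def by auto
      then have "c = (m, r)" using S(4) r c(2) unfolding inj_on_def by (metis snd_conv)
      then show False using c(1) unfolding P_def by simp
    qed
    ultimately have "(P, r) \<in> Sig" unfolding Sig_def using Prp by blast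
    then show "S \<in> F ` Sig" using SP unfolding F_def by force
  next
    fix S assume "S \<in> F ` Sig"
    then obtain P r where Pr: "P \<in> rook_placements L k" "r \<in> {1..a}" "r \<notin> snd ` P" "S = insert (m, r) P"
      unfolding Sig_def F_def by auto
    have P: "P \<subseteq> cells L" "card P = k" "inj_on fst P" "inj_on snd P"
      using Pr(1) unfolding rook_placements_def by auto
    have "S \<subseteq> cells L \<union> {m} \<times> {1..a}" using P(1) Pr by auto
    moreover have "card S = Suc k" using Pr Pm Pfin P(2) by simp
    moreover have "inj_on fst S"
    proof -
      have "m \<notin> fst ` P" using P(1) cells_fst unfolding m_def by fastforce
      then show ?thesis using P(3) Pr(4) by (simp add: image_iff)
    qed
    moreover have "inj_on snd S" using P(4) Pr(3,4) by auto
    ultimately have "S \<in> R" unfolding R_def rook_placements_def cs by blast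
    then show "S \<in> A2" unfolding A2_def using Pr(4) by auto
  qed
  have "rook_num (L @ [a]) (Suc k) = card A1 + card A2"
    unfolding rook_num_def R_def[symmetric] using R_un fin
    by (simp add: card_Un_disjoint)
  also have "card A2 = card Sig" unfolding A2_eq using inj by (simp add: card_image)
  finally show ?thesis using A1_eq card_Sig by (simp add: rook_num_def)
qed

lemma rook_rec_int:
  assumes bound: "\<forall>x\<in>set L. x \<le> a"
  shows "int (rook_num (L @ [a]) (Suc k)) = int (rook_num L (Suc k)) + (int a - int k) * int (rook_num L k)"
proof (cases "k \<le> a")
  case True then show ?thesis using rook_rec[OF bound, of k] by simp
next
  case False then show ?thesis using rook_rec[OF bound, of k] rp_zero_large[OF bound, of k] by simp
qed

lemma rook_num_snoc0: "rook_num (L @ [a]) 0 = rook_num L 0"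
  by (simp add: rook_num_0)



lemma req_snoc:
  assumes "\<And>k. rook_num A k = rook_num A' k" "\<forall>x\<in>set A. x \<le> a" "\<forall>x\<in>set A'. x \<le> a"
  shows "rook_num (A @ [a]) k = rook_num (A' @ [a]) k"
proof (cases k)
  case 0 then show ?thesis by (simp add: rook_num_0)
next
  case (Suc j) then show ?thesis using rook_rec[OF assms(2)] rook_rec[OF assms(3)] assms(1) by simp
qed

lemma req_append:
  assumes "\<And>k. rook_num A k = rook_num A' k" "sorted E"
    "\<forall>x\<in>set A. \<forall>e\<in>set E. x \<le> e" "\<forall>x\<in>set A'. \<forall>e\<in>set E. x \<le> e"
  shows "rook_num (A @ E) k = rook_num (A' @ E) k"
  using assms(2-4)
proof (induction E arbitrary: k rule: rev_induct)
  case Nil then show ?case using assms(1) by simp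
next
  case (snoc e E)
  have s: "sorted E" using snoc.prems(1) by (simp add: sorted_append)
  have IH: "\<And>k. rook_num (A @ E) k = rook_num (A' @ E) k"
    using snoc.IH[OF s] snoc.prems by auto
  have b1: "\<forall>x\<in>set (A @ E). x \<le> e" using snoc.prems by (auto simp: sorted_append)
  have b2: "\<forall>x\<in>set (A' @ E). x \<le> e" using snoc.prems by (auto simp: sorted_append)
  show ?case using req_snoc[OF IH b1 b2] by simp
qed

lemma swap_step:
  assumes "\<forall>x\<in>set A. x \<le> t"
  shows "rook_num (A @ [t, t+2]) k = rook_num (A @ [t+1, t+1]) k"
proof -
  have b1: "\<forall>x\<in>set (A @ [t]). x \<le> t+2" "\<forall>x\<in>set A. x \<le> t+1"
    "\<forall>x\<in>set (A @ [t+1]). x \<le> t+1" using assms by auto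
  have e1: "A @ [t, t+2] = (A @ [t]) @ [t+2]" "A @ [t+1, t+1] = (A @ [t+1]) @ [t+1]" by simp_all
  note r1 = rook_rec_int[OF b1(1)] and r2 = rook_rec_int[OF assms] and r3 = rook_rec_int[OF b1(3)]
    and r4 = rook_rec_int[OF b1(2)]
  have "int (rook_num (A @ [t, t+2]) k) = int (rook_num (A @ [t+1, t+1]) k)"
  proof (cases k)
    case 0 then show ?thesis by (simp add: rook_num_0)
  next
    case (Suc j)
    note kj = Suc
    show ?thesis
    proof (cases j)
      case 0
      show ?thesis unfolding e1 kj 0 r1 r3 r2 r4 by (simp add: rook_num_0 algebra_simps)
    next
      case (Suc i)
      show ?thesis unfolding e1 kj Suc r1 r3 r2[of "Suc i"] r4[of "Suc i"] r2[of i] r4[of i]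
        by (simp add: rook_num_snoc0 algebra_simps)
    qed
  qed
  then show ?thesis by simp
qed

definition BB :: "nat \<Rightarrow> nat \<Rightarrow> nat list" where
  "BB n t = [0..<t+1] @ [t] @ [t+2..<n+1]"

lemma BB_last: "0 < n \<Longrightarrow> BB n (n - 1) = [0..<n] @ [n - 1]"
  unfolding BB_def by simp

lemma sorted_BB: "sorted (BB n t)"
  unfolding BB_def by (auto simp: sorted_append)

lemma BB_swap:
  assumes "t + 1 < n"
  shows "rook_num (BB n t) k = rook_num (BB n (t+1)) k"
proof -
  have e1: "BB n t = ([0..<t+1] @ [t, t+2]) @ [Suc (Suc (Suc t))..<n+1]"
  proof -
    have "[t+2..<n+1] = (t+2) # [Suc (t+2)..<n+1]" by (rule upt_conv_Cons) (use assms in simp)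
    then show ?thesis unfolding BB_def by (simp del: upt_Suc)
  qed
  have e2: "BB n (t+1) = ([0..<t+1] @ [t+1, t+1]) @ [Suc (Suc (Suc t))..<n+1]"
    unfolding BB_def using assms by simp
  have sw: "\<And>k. rook_num ([0..<t+1] @ [t, t+2]) k = rook_num ([0..<t+1] @ [t+1, t+1]) k"
    by (rule swap_step) auto
  show ?thesis unfolding e1 e2 by (rule req_append[OF sw]) (auto simp del: upt_Suc)
qed

lemma BB_equiv:
  assumes "t < n"
  shows "rook_num (BB n t) k = rook_num (BB n (n - 1)) k"
proof -
  have "\<forall>t. t + d = n - 1 \<longrightarrow> rook_num (BB n t) k = rook_num (BB n (n - 1)) k" for d
  proof (induction d)
    case 0 then show ?case by simp
  next
    case (Suc d)
    show ?case
    proof (intro allI impI)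
      fix t assume "t + Suc d = n - 1"
      then have "t + 1 < n" "(t+1) + d = n - 1" by auto
      then show "rook_num (BB n t) k = rook_num (BB n (n - 1)) k"
        using BB_swap Suc.IH by metis
    qed
  qed
  from this[of "n - 1 - t"] show ?thesis using assms by simp
qed



lemma rook_num_beyond:
  assumes "length L < k" shows "rook_num L k = 0"
proof -
  have "rook_placements L k = {}"
  proof (rule ccontr)
    assume "rook_placements L k \<noteq> {}"
    then obtain S where S: "S \<subseteq> cells L" "card S = k" "inj_on fst S"
      unfolding rook_placements_def by auto
    have "fst ` S \<subseteq> {..<length L}" using S(1) cells_fst by fastforce
    hence "card (fst ` S) \<le> length L" using card_mono[of "{..<length L}"] by fastforce
    moreover have "card (fst ` S) = k" using S card_image by metis
    ultimately show False using assms by simp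
  qed
  then show ?thesis by (simp add: rook_num_def)
qed

definition ff :: "int \<Rightarrow> nat \<Rightarrow> int" where
  "ff x j = (\<Prod>i<j. x - int i)"

definition RP :: "nat list \<Rightarrow> int \<Rightarrow> int" where
  "RP L x = (\<Sum>k\<le>length L. int (rook_num L k) * ff x (length L - k))"

lemma ff_Suc: "ff x (Suc j) = ff x j * (x - int j)"
  unfolding ff_def by simp

lemma RP_prod:
  assumes "sorted L"
  shows "RP L x = (\<Prod>i<length L. x + int (L!i) - int i)"
  using assms
proof (induction L rule: rev_induct)
  case Nil then show ?case by (simp add: RP_def rook_num_0 ff_def)
next
  case (snoc a L)
  define m where "m = length L"
  have s: "sorted L" using snoc.prems by (simp add: sorted_append)
  have bound: "\<forall>x\<in>set L. x \<le> a" using snoc.prems by (simp add: sorted_append)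
  define r where "r = (\<lambda>k. int (rook_num L k))"
  have rec: "int (rook_num (L @ [a]) (Suc k)) = r (Suc k) + (int a - int k) * r k" for k
    unfolding r_def by (rule rook_rec_int[OF bound])
  have r0: "int (rook_num (L @ [a]) 0) = r 0" unfolding r_def by (simp add: rook_num_0)
  have rbeyond: "r (Suc m) = 0" unfolding r_def m_def by (simp add: rook_num_beyond)
  have "RP (L @ [a]) x = (\<Sum>k\<le>Suc m. int (rook_num (L @ [a]) k) * ff x (Suc m - k))"
    unfolding RP_def m_def by simp
  also have "\<dots> = r 0 * ff x (Suc m) + (\<Sum>k\<le>m. int (rook_num (L @ [a]) (Suc k)) * ff x (m - k))"
    by (subst sum.atMost_Suc_shift) (simp add: r0)
  also have "\<dots> = r 0 * ff x (Suc m) + (\<Sum>k\<le>m. r (Suc k) * ff x (m - k))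
      + (\<Sum>k\<le>m. (int a - int k) * r k * ff x (m - k))"
    unfolding rec add.assoc sum.distrib[symmetric]
    by (intro arg_cong2[where f="(+)"] refl sum.cong) (simp add: distrib_right)
  also have "r 0 * ff x (Suc m) + (\<Sum>k\<le>m. r (Suc k) * ff x (m - k))
      = (\<Sum>k\<le>Suc m. r k * ff x (Suc m - k))"
    by (subst sum.atMost_Suc_shift) simp
  also have "\<dots> = (\<Sum>k\<le>m. r k * ff x (Suc m - k))"
    using rbeyond by simp
  also have "\<dots> = (\<Sum>k\<le>m. r k * ff x (m - k) * (x - int m + int k))"
    by (rule sum.cong) (auto simp: Suc_diff_le ff_Suc of_nat_diff)
  also have "(\<Sum>k\<le>m. r k * ff x (m - k) * (x - int m + int k)) + (\<Sum>k\<le>m. (int a - int k) * r k * ff x (m - k))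
      = (\<Sum>k\<le>m. r k * ff x (m - k)) * (x + int a - int m)"
    by (simp only: sum.distrib[symmetric] sum_distrib_right) (rule sum.cong, simp_all add: algebra_simps)
  also have "(\<Sum>k\<le>m. r k * ff x (m - k)) = RP L x"
    unfolding RP_def r_def m_def by simp
  also have "RP L x = (\<Prod>i<m. x + int (L!i) - int i)"
    using snoc.IH[OF s] unfolding m_def by simp
  finally show ?case unfolding m_def by (simp add: nth_append)
qed



lemma order_lin: "order a [:c, 1::int:] = (if c = -a then 1 else 0)"
proof (cases "c = -a")
  case True
  then show ?thesis using order_power_n_n[of a 1] by simp
next
  case False
  have "order a [:c, 1::int:] = 0" by (rule order_0I) (use False in auto)
  then show ?thesis using False by simp
qed

lemma order_prod_lin:
  fixes c :: "nat \<Rightarrow> int"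
  assumes "finite I"
  shows "order a (\<Prod>i\<in>I. [:c i, 1:]) = card {i\<in>I. c i = -a}"
  using assms
proof (induction I rule: finite_induct)
  case empty
  have "order a (1::int poly) = 0" by (rule order_0I) simp
  then show ?case by simp
next
  case (insert x F)
  have nz: "(\<Prod>i\<in>insert x F. [:c i, 1:]) \<noteq> 0"
    using insert.hyps by (subst prod_zero_iff) auto
  have "order a (\<Prod>i\<in>insert x F. [:c i, 1:]) = order a [:c x, 1:] + order a (\<Prod>i\<in>F. [:c i, 1:])"
  proof -
    have eq: "(\<Prod>i\<in>insert x F. [:c i, 1:]) = [:c x, 1:] * (\<Prod>i\<in>F. [:c i, 1:])"
      by (rule prod.insert[OF insert.hyps])
    show ?thesis using nz unfolding eq by (rule order_mult)
  qed
  also have "\<dots> = (if c x = -a then 1 else 0) + card {i\<in>F. c i = -a}"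
    using insert.IH order_lin by simp
  also have "\<dots> = card {i\<in>insert x F. c i = -a}"
  proof (cases "c x = -a")
    case True
    then have "{i\<in>insert x F. c i = -a} = insert x {i\<in>F. c i = -a}" by auto
    then show ?thesis using True insert.hyps by simp
  next
    case False
    then have "{i\<in>insert x F. c i = -a} = {i\<in>F. c i = -a}" by auto
    then show ?thesis using False by simp
  qed
  finally show ?case .
qed

lemma counts_equal:
  assumes "length L1 = m" "length L2 = m" "sorted L1" "sorted L2"
    "\<And>k. rook_num L1 k = rook_num L2 k"
  shows "card {i. i < m \<and> int (L1!i) - int i = v} = card {i. i < m \<and> int (L2!i) - int i = v}"
proof -
  define Q where "Q = (\<lambda>L. \<Prod>i<m. [:int (L!i) - int i, 1::int:])"
  have polyQ: "poly (Q L) x = RP L x" if "length L = m" "sorted L" for L x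
    unfolding Q_def RP_prod[OF that(2)] that(1) poly_prod
    by (rule prod.cong) (auto simp: algebra_simps)
  have "RP L1 = RP L2" unfolding RP_def assms(1,2) assms(5) by simp
  then have "poly (Q L1) = poly (Q L2)" using polyQ assms by auto
  then have QQ: "Q L1 = Q L2" by (simp add: poly_eq_poly_eq_iff)
  have ord: "order (-v) (Q L) = card {i. i < m \<and> int (L!i) - int i = v}" for L
  proof -
    have "order (-v) (Q L) = card {i\<in>{..<m}. int (L!i) - int i = - (-v)}"
      unfolding Q_def by (rule order_prod_lin) simp
    also have "{i\<in>{..<m}. int (L!i) - int i = - (-v)} = {i. i < m \<and> int (L!i) - int i = v}" by auto
    finally show ?thesis .
  qed
  show ?thesis using ord[of L1] ord[of L2] QQ by simp
qed



lemma card1_eq: "card A = 1 \<Longrightarrow> a \<in> A \<Longrightarrow> b \<in> A \<Longrightarrow> a = b"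
  by (metis card_1_singletonE singletonD)

lemma comb:
  fixes d :: "nat \<Rightarrow> int"
  assumes m: "m = s + n + 1" and n: "0 < n"
   and d0: "d 0 \<ge> 0"
   and step: "\<And>i. Suc i < m \<Longrightarrow> d (Suc i) \<ge> d i - 1"
   and cnt: "\<And>v. card {i. i < m \<and> d i = v} = card {i. i < m \<and> e i = v}"
   and e: "e = (\<lambda>i. if i \<le> s then - int i else if i < m - 1 then - int s else - int s - 1)"
  shows "\<exists>j. s < j \<and> j < m \<and> (\<forall>i<m. d i = (if i \<le> s then - int i else if i = j then - int s - 1 else - int s))"
proof -
  have fin: "finite {i. i < m \<and> d i = v}" for v by simp
  have range: "- int s - 1 \<le> d i \<and> d i \<le> 0" if "i < m" for i
  proof (rule ccontr)
    assume A: "\<not> (- int s - 1 \<le> d i \<and> d i \<le> 0)"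
    have "{k. k < m \<and> e k = d i} = {}" using A unfolding e by auto
    then have "card {k. k < m \<and> d k = d i} = 0" using cnt by simp
    moreover have "i \<in> {k. k < m \<and> d k = d i}" using that by simp
    ultimately show False using fin[of "d i"] card_0_eq by blast
  qed
  have uniq: "i1 = i2" if "i1 < m" "i2 < m" "d i1 = v" "d i2 = v" "- int s < v" "v \<le> 0" for i1 i2 v
  proof -
    have "{k. k < m \<and> e k = v} = {nat (-v)}"
    proof (rule set_eqI)
      fix k
      show "k \<in> {k. k < m \<and> e k = v} \<longleftrightarrow> k \<in> {nat (-v)}"
      proof (cases "k \<le> s")
        case True
        then have "e k = - int k" unfolding e by simp
        moreover have "k < m" using True m by simp
        ultimately show ?thesis using that(5,6) by auto
      next
        case False
        then have "e k \<le> - int s" unfolding e by simp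
        moreover have "nat (-v) < s" using that(5,6) by simp
        ultimately show ?thesis using that(5,6) False by auto
      qed
    qed
    then have c1: "card {k. k < m \<and> d k = v} = 1" using cnt by simp
    show ?thesis by (rule card1_eq[OF c1]) (use that in auto)
  qed
  have dlow: "\<forall>j\<le>i. d j = - int j" if "i \<le> s" for i
    using that
  proof (induction i)
    case 0 then show ?case using d0 range[of 0] m by auto
  next
    case (Suc i)
    then have IH: "\<forall>j\<le>i. d j = - int j" by simp
    have ge: "d (Suc i) \<ge> - int i - 1" using step[of i] IH Suc.prems m by force
    have "d (Suc i) = - int (Suc i)"
    proof (rule ccontr)
      assume ne: "d (Suc i) \<noteq> - int (Suc i)"
      define v where "v = d (Suc i)"
      have v: "- int i \<le> v" "v \<le> 0" using ge ne range[of "Suc i"] Suc.prems m unfolding v_def by auto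
      have "d (nat (-v)) = v" using IH v by simp
      then have "nat (-v) = Suc i"
        using uniq[of "nat (-v)" "Suc i" v] v Suc.prems m unfolding v_def by auto
      then show False using v by auto
    qed
    then show ?case using IH le_Suc_eq by auto
  qed
  have dlow': "d i = - int i" if "i \<le> s" for i using dlow[OF that] by simp
  have dhigh: "d i = - int s \<or> d i = - int s - 1" if "s < i" "i < m" for i
  proof (rule ccontr)
    assume A: "\<not> (d i = - int s \<or> d i = - int s - 1)"
    define v where "v = d i"
    have v: "- int s < v" "v \<le> 0" using A range[OF that(2)] unfolding v_def by auto
    have "d (nat (-v)) = v" using dlow' v by simp
    then have "nat (-v) = i" using uniq[of "nat (-v)" i v] v that m unfolding v_def by auto
    then show False using v that by auto
  qed
  have "{k. k < m \<and> e k = - int s - 1} = {m - 1}"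
  proof (rule set_eqI)
    fix k
    have "e k = - int s - 1 \<longleftrightarrow> k = m - 1" if "k < m"
    proof (cases "k \<le> s")
      case True
      then show ?thesis unfolding e using m n by auto
    next
      case False
      then show ?thesis unfolding e using m n that by auto
    qed
    then show "k \<in> {k. k < m \<and> e k = - int s - 1} \<longleftrightarrow> k \<in> {m - 1}" using m by auto
  qed
  then have "card {k. k < m \<and> d k = - int s - 1} = 1" using cnt by simp
  then obtain j where j: "{k. k < m \<and> d k = - int s - 1} = {j}" by (metis card_1_singletonE)
  have jm: "j < m" "d j = - int s - 1" using j by auto
  have js: "s < j"
  proof (rule ccontr)
    assume "\<not> s < j"
    then have "d j = - int j" using dlow' by simp
    then show False using jm \<open>\<not> s < j\<close> by simp
  qed
  have "\<forall>i<m. d i = (if i \<le> s then - int i else if i = j then - int s - 1 else - int s)"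
  proof (intro allI impI)
    fix i assume i: "i < m"
    show "d i = (if i \<le> s then - int i else if i = j then - int s - 1 else - int s)"
    proof (cases "i \<le> s")
      case True then show ?thesis using dlow' by simp
    next
      case False
      then have "i = j \<or> d i \<noteq> - int s - 1" using j i by auto
      then show ?thesis using False dhigh[of i] i jm by auto
    qed
  qed
  then show ?thesis using js jm by blast
qed



definition T :: "nat \<Rightarrow> nat \<Rightarrow> nat list" where
  "T n t = [1..<t+1] @ [t] @ [t+2..<n+1]"

lemma BB_T: "BB n t = 0 # T n t"
  unfolding BB_def T_def by (simp add: upt_conv_Cons del: upt_Suc)

lemma length_T: "t < n \<Longrightarrow> length (T n t) = n"
  unfolding T_def by (simp del: upt_Suc)

lemma nth_T: assumes "t < n" "i < n" shows "T n t ! i = (if i = t then t else i + 1)"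
proof -
  consider "i < t" | "i = t" | "t < i" by arith
  then show ?thesis
  proof cases
    case 1 then show ?thesis unfolding T_def by (simp add: nth_append del: upt_Suc)
  next
    case 2 then show ?thesis unfolding T_def by (simp add: nth_append del: upt_Suc)
  next
    case 3
    then have "T n t ! i = [t+2..<n+1] ! (i - t - 1)" unfolding T_def by (simp add: nth_append del: upt_Suc)
    also have "\<dots> = t + 2 + (i - t - 1)" using assms 3 by (intro nth_upt) simp
    finally show ?thesis using 3 by simp
  qed
qed

lemma length_BB: "t < n \<Longrightarrow> length (BB n t) = n + 1"
  by (simp add: BB_T length_T)

lemma nth_BB: assumes "t < n" "i \<le> n" shows "BB n t ! i = (if i = t + 1 then t else i)"
proof (cases i)
  case 0 then show ?thesis by (simp add: BB_T)
next
  case (Suc j) then show ?thesis using nth_T[of t n j] assms by (simp add: BB_T)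
qed

definition g :: "nat \<Rightarrow> nat \<Rightarrow> nat list" where
  "g n t = canon (BB n t)"

lemma g_T: "g n t = canon (T n t)"
  unfolding g_def BB_T canon_Cons0 ..

lemma pad_g: "t < n \<Longrightarrow> pad n (g n t) = T n t"
  using pad_canon[of "T n t"] length_T[of t n] by (simp add: g_T)

lemma length_g: "t < n \<Longrightarrow> length (g n t) \<le> n"
  unfolding g_T canon_def using length_dropWhile_le length_T by metis

lemma g_pos: assumes "t < n" "0 < t" shows "g n t = T n t"
proof -
  have "T n t ! 0 = 1" using nth_T[of t n 0] assms by simp
  moreover have "T n t \<noteq> []" using length_T[of t n] assms by auto
  ultimately obtain xs where "T n t = 1 # xs" by (metis list.exhaust nth_Cons_0)
  then show ?thesis unfolding g_T canon_def by simp
qed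

lemma rook_adj_refl: "\<not> rook_adj u u"
  unfolding rook_adj_def Let_def by auto

lemma adj_g: assumes "a < n" "b < n" "a \<noteq> b" shows "rook_adj (g n a) (g n b)"
proof -
  have mx: "max (length (g n a)) (length (g n b)) = n"
  proof (cases "a = 0")
    case True
    then have "0 < b" using assms by simp
    then show ?thesis using g_pos[of b n] length_T[of b n] length_g[of a n] assms by simp
  next
    case False
    then show ?thesis using g_pos[of a n] length_T[of a n] length_g[of b n] assms by simp
  qed
  show ?thesis unfolding rook_adj_def Let_def mx pad_g[OF assms(1)] pad_g[OF assms(2)]
  proof (intro exI conjI allI impI)
    show "b < n" "a < n" "b \<noteq> a" "(0::nat) < 1" using assms by auto
    show "T n a ! b = T n b ! b + 1" using nth_T assms by simp
    show "T n a ! a + 1 = T n b ! a" using nth_T assms by simp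
    fix l assume "l < n" "l \<noteq> b" "l \<noteq> a"
    then show "T n a ! l = T n b ! l" using nth_T assms by simp
  qed
qed

lemma inj_g: "inj_on (g n) {..<n}"
  using adj_g rook_adj_refl unfolding inj_on_def by (metis lessThan_iff)



lemma vertices_sub:
  assumes n: "0 < n" and C: "sorted C" "rook_equiv C ([0..<n] @ [n - 1])"
  shows "canon C \<in> g n ` {..<n}"
proof -
  define B where "B = BB n (n - 1)"
  have BB: "[0..<n] @ [n - 1] = B" unfolding B_def using BB_last[OF n] by simp
  define M where "M = max (length C) (n + 1)"
  define s where "s = M - (n + 1)"
  have Ms: "M = s + n + 1" unfolding s_def M_def by simp
  define PC where "PC = pad M C"
  define PB where "PB = pad M B"
  have lB: "length B = n + 1" unfolding B_def using length_BB n by simp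
  have lPC: "length PC = M" unfolding PC_def pad_def M_def by simp
  have lPB: "length PB = M" unfolding PB_def pad_def M_def using lB by simp
  have sPC: "sorted PC" unfolding PC_def using C(1) by (rule sorted_pad)
  have sPB: "sorted PB" unfolding PB_def B_def by (rule sorted_pad[OF sorted_BB])
  have req: "rook_num PC k = rook_num PB k" for k
    using C(2) unfolding PC_def PB_def rook_num_pad rook_equiv_def BB by simp
  have PB_eq: "PB = replicate s 0 @ B" unfolding PB_def pad_def s_def lB ..
  define e where "e = (\<lambda>i. if i \<le> s then - int i else if i < M - 1 then - int s else - int s - 1)"
  have eB: "int (PB ! i) - int i = e i" if "i < M" for i
  proof (cases "i < s")
    case True then show ?thesis unfolding PB_eq e_def by (simp add: nth_append)
  next
    case False
    then have "PB ! i = B ! (i - s)" unfolding PB_eq by (simp add: nth_append)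
    also have "\<dots> = (if i - s = n then n - 1 else i - s)"
      unfolding B_def using nth_BB[of "n - 1" n "i - s"] n that Ms by auto
    finally show ?thesis unfolding e_def using False that Ms n by auto
  qed
  define d where "d = (\<lambda>i. int (PC ! i) - int i)"
  have cnt: "card {i. i < M \<and> d i = v} = card {i. i < M \<and> e i = v}" for v
  proof -
    have "card {i. i < M \<and> d i = v} = card {i. i < M \<and> int (PB ! i) - int i = v}"
      unfolding d_def by (rule counts_equal[OF lPC lPB sPC sPB req])
    also have "{i. i < M \<and> int (PB ! i) - int i = v} = {i. i < M \<and> e i = v}"
      using eB by auto
    finally show ?thesis .
  qed
  have step: "d (Suc i) \<ge> d i - 1" if "Suc i < M" for i
  proof -
    have "PC ! i \<le> PC ! Suc i" using sPC that lPC by (simp add: sorted_iff_nth_mono)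
    then show ?thesis unfolding d_def by simp
  qed
  have d0: "d 0 \<ge> 0" unfolding d_def by simp
  obtain j where j: "s < j" "j < M"
    "\<forall>i<M. d i = (if i \<le> s then - int i else if i = j then - int s - 1 else - int s)"
    using comb[OF Ms n d0 step cnt e_def] by blast
  define t where "t = j - s - 1"
  have tn: "t < n" unfolding t_def using j Ms by simp
  have PCeq: "PC = replicate s 0 @ BB n t"
  proof (rule nth_equalityI)
    show "length PC = length (replicate s 0 @ BB n t)" using lPC length_BB[OF tn] Ms by simp
    fix i assume "i < length PC"
    then have i: "i < M" using lPC by simp
    have di: "int (PC ! i) = d i + int i" unfolding d_def by simp
    show "PC ! i = (replicate s 0 @ BB n t) ! i"
    proof (cases "i < s")
      case True
      then show ?thesis using di j(3) i by (simp add: nth_append)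
    next
      case False
      then have "(replicate s 0 @ BB n t) ! i = BB n t ! (i - s)" by (simp add: nth_append)
      also have "\<dots> = (if i - s = t + 1 then t else i - s)"
        using nth_BB[OF tn, of "i - s"] i Ms by simp
      moreover have pci: "int (PC ! i) = (if i = j then int i - int s - 1 else int i - int s)"
        using di j(1,3) i False by auto
      then have "PC ! i = (if i = j then i - s - 1 else i - s)"
      proof (cases "i = j")
        case True
        have "int (PC ! i) = int i - int s - 1" using pci True by simp
        then have "PC ! i = i - s - 1" using True j(1) by linarith
        then show ?thesis using True by simp
      next
        case F: False
        have "int (PC ! i) = int i - int s" using pci F by simp
        then have "PC ! i = i - s" using False by linarith
        then show ?thesis using F by simp
      qed
      ultimately show ?thesis using j i False unfolding t_def by (cases "i = j") auto
    qed
  qed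
  have "canon C = canon (BB n t)"
    using canon_pad[of M C] PCeq canon_rep unfolding PC_def by metis
  then show ?thesis using tn unfolding g_def by auto
qed

lemma vertices_eq:
  assumes n: "0 < n"
  shows "rook_graph_vertices ([0..<n] @ [n - 1]) = g n ` {..<n}"
proof
  show "rook_graph_vertices ([0..<n] @ [n - 1]) \<subseteq> g n ` {..<n}"
    unfolding rook_graph_vertices_def ferrers_def using vertices_sub[OF n] by blast
next
  show "g n ` {..<n} \<subseteq> rook_graph_vertices ([0..<n] @ [n - 1])"
  proof
    fix u assume "u \<in> g n ` {..<n}"
    then obtain t where t: "t < n" "u = g n t" by auto
    have "rook_equiv (BB n t) ([0..<n] @ [n - 1])"
      unfolding rook_equiv_def BB_last[OF n, symmetric] using BB_equiv[OF t(1)] by simp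
    then show "u \<in> rook_graph_vertices ([0..<n] @ [n - 1])"
      unfolding rook_graph_vertices_def ferrers_def g_def t(2) using sorted_BB by blast
  qed
qed

theorem theorem11:
  fixes n :: nat
  assumes "n > 0"
  shows "rook_graph_iso_complete ([0..<n] @ [n - 1]) n"
proof -
  define V where "V = rook_graph_vertices ([0..<n] @ [n - 1])"
  have V: "V = g n ` {..<n}" unfolding V_def using vertices_eq[OF assms] .
  define f where "f = the_inv_into {..<n} (g n)"
  have bij: "bij_betw f V {..<n}"
    unfolding V f_def by (rule bij_betw_the_inv_into) (simp add: bij_betw_def inj_g)
  have adj: "rook_adj u v \<longleftrightarrow> f u \<noteq> f v" if uV: "u \<in> V" and vV: "v \<in> V" for u v
  proof -
    obtain a where a: "a < n" "u = g n a" using uV unfolding V by auto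
    obtain b where b: "b < n" "v = g n b" using vV unfolding V by auto
    note ab = a(1) b(1) a(2) b(2)
    have fa: "f u = a" "f v = b" unfolding f_def ab using the_inv_into_f_f[OF inj_g] ab by auto
    show ?thesis unfolding fa using adj_g[OF ab(1,2)] rook_adj_refl ab by auto
  qed
  show ?thesis unfolding rook_graph_iso_complete_def V_def[symmetric] using bij adj by blast
qed

end
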